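(* Let $G=(V,E)$ be a finite graph satisfying the $CD\psi(n,-K)$ condition for some $n>0$, $K>0$, where $\psi:(0,+\infty)\to\mathbb R$ is a $C^1$ concave function. Let $u$ be a positive solution of the heat equation $\partial_t u=\Delta u$ on $V$ and fix $0<\alpha<1$. Then for all vertices and all $t>0$, $$(1-\alpha)\Gamma^{\psi}(u)-\psi'(1)\frac{\partial_{t}u}{u}\leq \frac{n}{2(1-\alpha)t}+\frac{Kn}{\alpha}.$$
   Context: Graphs: $G=(V,E)$ is a connected, locally finite graph; each edge $xy$ carries a weight $w_{xy}>0$ (possibly asymmetric), and $\mu:V\to(0,\infty)$ is a vertex measure; $y\sim x$ means $xy\in E$. Laplacian: $\Delta f(x)=\frac{1}{\mu(x)}\sum_{y\sim x}w_{xy}(f(y)-f(x))$. For $\psi:(0,\infty)\to\mathbb R$ and $f:V\to(0,\infty)$: the $\psi$-Laplacian is $\Delta^\psi f(x)=\Delta\big[\psi\big(\tfrac{f}{f(x)}\big)\big](x)$ (the Laplacian at $x$ of the function $y\mapsto\psi(f(y)/f(x))$); for $C^1$ $\psi$, $\overline\psi(s)=\psi'(1)(s-1)-(\psi(s)-\psi(1))$ and the $\psi$-gradient is $\Gamma^\psi f=\Delta^{\overline\psi}f$; $(\Omega^\psi f)(x)=\Delta\big[\psi'\big(\tfrac{f}{f(x)}\big)\tfrac{f}{f(x)}\big(\tfrac{\Delta f}{f}-\tfrac{\Delta f(x)}{f(x)}\big)\big](x)$; and the second $\psi$-gradient is given by $2\Gamma_2^\psi(f)=\Omega^\psi f+\frac{\Delta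 f\,\Delta^\psi f}{f}-\frac{\Delta(f\Delta^\psi f)}{f}$. The graph satisfies $CD\psi(n,K)$ if for every $f:V\to(0,\infty)$ and every vertex, $\Gamma_2^\psi(f)\ge\frac1n(\Delta^\psi f)^2+K\Gamma^\psi(f)$. A positive solution of the heat equation on $U\subset V$ is $u:V\times[0,\infty)\to(0,\infty)$, continuously differentiable in $t$, with $\partial_t u=\Delta u$ at every $x\in U$, $t\ge0$; operators are applied to $u(\cdot,t)$ at each fixed time. *)

theory Defs
  imports "HOL-Analysis.Analysis"
begin

definition lap :: "('v \<Rightarrow> 'v \<Rightarrow> bool) \<Rightarrow> ('v \<Rightarrow> 'v \<Rightarrow> real) \<Rightarrow> ('v \<Rightarrow> real)
    \<Rightarrow> ('v \<Rightarrow> real) \<Rightarrow> 'v \<Rightarrow> real" where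
  "lap E w mu f x = (1 / mu x) * (\<Sum>y\<in>{y. E x y}. w x y * (f y - f x))"

definition psi_lap :: "('v \<Rightarrow> 'v \<Rightarrow> bool) \<Rightarrow> ('v \<Rightarrow> 'v \<Rightarrow> real) \<Rightarrow> ('v \<Rightarrow> real)
    \<Rightarrow> (real \<Rightarrow> real) \<Rightarrow> ('v \<Rightarrow> real) \<Rightarrow> 'v \<Rightarrow> real" where
  "psi_lap E w mu psi f x = lap E w mu (\<lambda>y. psi (f y / f x)) x"

definition psi_bar :: "(real \<Rightarrow> real) \<Rightarrow> real \<Rightarrow> real" where
  "psi_bar psi s = deriv psi 1 * (s - 1) - (psi s - psi 1)"

definition psi_Gamma :: "('v \<Rightarrow> 'v \<Rightarrow> bool) \<Rightarrow> ('v \<Rightarrow> 'v \<Rightarrow> real) \<Rightarrow> ('v \<Rightarrow> real)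
    \<Rightarrow> (real \<Rightarrow> real) \<Rightarrow> ('v \<Rightarrow> real) \<Rightarrow> 'v \<Rightarrow> real" where
  "psi_Gamma E w mu psi f x = psi_lap E w mu (psi_bar psi) f x"

definition psi_Omega :: "('v \<Rightarrow> 'v \<Rightarrow> bool) \<Rightarrow> ('v \<Rightarrow> 'v \<Rightarrow> real) \<Rightarrow> ('v \<Rightarrow> real)
    \<Rightarrow> (real \<Rightarrow> real) \<Rightarrow> ('v \<Rightarrow> real) \<Rightarrow> 'v \<Rightarrow> real" where
  "psi_Omega E w mu psi f x =
     lap E w mu (\<lambda>y. deriv psi (f y / f x) * (f y / f x) *
        (lap E w mu f y / f y - lap E w mu f x / f x)) x"

definition psi_Gamma2 :: "('v \<Rightarrow> 'v \<Rightarrow> bool) \<Rightarrow> ('v \<Rightarrow> 'v \<Rightarrow> real) \<Rightarrow> ('v \<Rightarrow> real)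
    \<Rightarrow> (real \<Rightarrow> real) \<Rightarrow> ('v \<Rightarrow> real) \<Rightarrow> 'v \<Rightarrow> real" where
  "psi_Gamma2 E w mu psi f x =
     (psi_Omega E w mu psi f x
      + lap E w mu f x * psi_lap E w mu psi f x / f x
      - lap E w mu (\<lambda>y. f y * psi_lap E w mu psi f y) x / f x) / 2"

definition CD_psi :: "('v \<Rightarrow> 'v \<Rightarrow> bool) \<Rightarrow> ('v \<Rightarrow> 'v \<Rightarrow> real) \<Rightarrow> ('v \<Rightarrow> real)
    \<Rightarrow> (real \<Rightarrow> real) \<Rightarrow> real \<Rightarrow> real \<Rightarrow> bool" where
  "CD_psi E w mu psi n K \<longleftrightarrow>
     (\<forall>f x. (\<forall>y. f y > 0) \<longrightarrow>
        psi_Gamma2 E w mu psi f x \<ge> (1 / n) * (psi_lap E w mu psi f x)\<^sup>2 + K * psi_Gamma E w mu psi f x)"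

definition weighted_graph :: "('v \<Rightarrow> 'v \<Rightarrow> bool) \<Rightarrow> ('v \<Rightarrow> 'v \<Rightarrow> real) \<Rightarrow> ('v \<Rightarrow> real) \<Rightarrow> bool" where
  "weighted_graph E w mu \<longleftrightarrow>
     (\<forall>x y. E x y \<longleftrightarrow> E y x) \<and>
     (\<forall>x. finite {y. E x y}) \<and>
     (\<forall>x y. E x y \<longrightarrow> w x y > 0) \<and>
     (\<forall>x. mu x > 0) \<and>
     (\<forall>x y. E\<^sup>*\<^sup>* x y)"

definition pos_heat_solution :: "('v \<Rightarrow> 'v \<Rightarrow> bool) \<Rightarrow> ('v \<Rightarrow> 'v \<Rightarrow> real) \<Rightarrow> ('v \<Rightarrow> real)
    \<Rightarrow> 'v set \<Rightarrow> ('v \<Rightarrow> real \<Rightarrow> real) \<Rightarrow> bool" where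
  "pos_heat_solution E w mu U u \<longleftrightarrow>
     (\<forall>x t. t \<ge> 0 \<longrightarrow> u x t > 0) \<and>
     (\<forall>x. (\<forall>t\<ge>0. (u x) differentiable (at t within {0..})) \<and>
          continuous_on {0..} (\<lambda>t. vector_derivative (u x) (at t within {0..}))) \<and>
     (\<forall>x\<in>U. \<forall>t\<ge>0. (u x has_real_derivative lap E w mu (\<lambda>y. u y t) x) (at t within {0..}))"

end

theory Submission
  imports Defs
begin


lemma lap_lin:
  fixes E :: "'v::finite \<Rightarrow> 'v \<Rightarrow> bool"
  shows "lap E w mu (\<lambda>y. a * g y + b * h y) x = a * lap E w mu g x + b * lap E w mu h x"
proof -
  have "(\<Sum>y\<in>{y. E x y}. w x y * (a * g y + b * h y - (a * g x + b * h x)))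
     = a * (\<Sum>y\<in>{y. E x y}. w x y * (g y - g x)) + b * (\<Sum>y\<in>{y. E x y}. w x y * (h y - h x))"
    by (simp add: sum.distrib[symmetric] sum_distrib_left algebra_simps)
  then show ?thesis unfolding lap_def by (simp add: algebra_simps)
qed

lemma lap_max:
  fixes E :: "'v::finite \<Rightarrow> 'v \<Rightarrow> bool"
  assumes "\<forall>y. f y > 0" "mu x > 0" "\<forall>y. E x y \<longrightarrow> w x y > 0" "\<forall>y. h y \<le> h x"
  shows "lap E w mu (\<lambda>y. f y * h y) x - lap E w mu f x * h x \<le> 0"
proof -
  have "lap E w mu (\<lambda>y. f y * h y) x - lap E w mu f x * h x
     = (1 / mu x) * (\<Sum>y\<in>{y. E x y}. w x y * f y * (h y - h x))"
    unfolding lap_def by (simp add: sum_distrib_left sum_distrib_right sum_subtractf[symmetric] algebra_simps)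
  also have "\<dots> \<le> 0"
  proof -
    have "(\<Sum>y\<in>{y. E x y}. w x y * f y * (h y - h x)) \<le> 0"
      apply (rule sum_nonpos)
      using assms by (auto intro!: mult_nonneg_nonpos simp: less_imp_le)
    then show ?thesis using assms(2) by (simp add: divide_nonpos_pos)
  qed
  finally show ?thesis .
qed

lemma gamma_eq:
  fixes E :: "'v::finite \<Rightarrow> 'v \<Rightarrow> bool"
  assumes "f x > 0"
  shows "psi_Gamma E w mu psi f x = deriv psi 1 * (lap E w mu f x / f x) - psi_lap E w mu psi f x"
proof -
  have fx: "f x / f x = 1" using assms by simp
  have pt: "w x y * (psi_bar psi (f y / f x) - psi_bar psi (f x / f x))
     = deriv psi 1 * (w x y * (f y - f x) / f x) - w x y * (psi (f y / f x) - psi (f x / f x))" for y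
  proof -
    have "psi_bar psi (f y / f x) - psi_bar psi (f x / f x) = deriv psi 1 * ((f y - f x) / f x) - (psi (f y / f x) - psi 1)"
      unfolding psi_bar_def fx using assms by (simp add: diff_divide_distrib)
    then show ?thesis unfolding fx by (simp add: right_diff_distrib)
  qed
  have "(\<Sum>y\<in>{y. E x y}. w x y * (psi_bar psi (f y / f x) - psi_bar psi (f x / f x)))
    = deriv psi 1 * ((\<Sum>y\<in>{y. E x y}. w x y * (f y - f x)) / f x)
      - (\<Sum>y\<in>{y. E x y}. w x y * (psi (f y / f x) - psi (f x / f x)))"
    unfolding pt sum_subtractf sum_distrib_left[symmetric] sum_divide_distrib[symmetric] ..
  then show ?thesis unfolding psi_Gamma_def psi_lap_def lap_def by (simp add: right_diff_distrib)
qed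

lemma gamma_nonneg:
  fixes E :: "'v::finite \<Rightarrow> 'v \<Rightarrow> bool"
  assumes f: "\<forall>y. f y > 0" and mu: "mu x > 0" and wp: "\<forall>y. E x y \<longrightarrow> w x y > 0"
    and psi_diff: "\<forall>s>0. psi differentiable (at s)"
    and psi_concave: "concave_on {0<..} psi"
  shows "psi_Gamma E w mu psi f x \<ge> 0"
proof -
  have bar: "psi_bar psi s \<ge> 0" if "s > 0" for s
  proof -
    have cv: "convex_on {0<..} (\<lambda>x. - psi x)" using psi_concave by (simp add: concave_on_def)
    have d: "(psi has_field_derivative deriv psi 1) (at 1)"
      using psi_diff by (simp add: DERIV_deriv_iff_real_differentiable)
    have d2: "((\<lambda>x. - psi x) has_field_derivative - deriv psi 1) (at 1 within {0<..})"
      by (rule DERIV_minus, rule has_field_derivative_at_within, rule d)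
    have "(- psi s) - (- psi 1) \<ge> (- deriv psi 1) * (s - 1)"
      by (rule convex_on_imp_above_tangent[OF cv _ _ _ d2]) (use that in \<open>auto simp: interior_open\<close>)
    then show ?thesis unfolding psi_bar_def by (simp add: algebra_simps)
  qed
  have fx: "f x / f x = 1" using f by (metis less_irrefl divide_self)
  have b1: "psi_bar psi 1 = 0" by (simp add: psi_bar_def)
  have "(\<Sum>y\<in>{y. E x y}. w x y * (psi_bar psi (f y / f x) - psi_bar psi (f x / f x))) \<ge> 0"
  proof (rule sum_nonneg)
    fix y assume "y \<in> {y. E x y}"
    hence "w x y \<ge> 0" using wp by (simp add: less_imp_le)
    moreover have "psi_bar psi (f y / f x) \<ge> 0" using bar f by (simp add: divide_pos_pos)
    ultimately show "w x y * (psi_bar psi (f y / f x) - psi_bar psi (f x / f x)) \<ge> 0"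
      unfolding fx b1 by simp
  qed
  thus ?thesis
    unfolding psi_Gamma_def psi_lap_def lap_def using mu by simp
qed



lemma lap_deriv:
  fixes E :: "'v::finite \<Rightarrow> 'v \<Rightarrow> bool"
  assumes "\<forall>y. (g y has_real_derivative g' y) (at t within S)"
  shows "((\<lambda>t. lap E w mu (\<lambda>y. g y t) x) has_real_derivative lap E w mu g' x) (at t within S)"
proof -
  have "((\<lambda>t. w x y * (g y t - g x t)) has_real_derivative w x y * (g' y - g' x)) (at t within S)" for y
    by (rule DERIV_cmult, rule DERIV_diff) (use assms in auto)
  hence "((\<lambda>t. \<Sum>y\<in>{y. E x y}. w x y * (g y t - g x t)) has_real_derivative
          (\<Sum>y\<in>{y. E x y}. w x y * (g' y - g' x))) (at t within S)"
    by (intro DERIV_sum) auto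
  hence "((\<lambda>t. (1 / mu x) * (\<Sum>y\<in>{y. E x y}. w x y * (g y t - g x t))) has_real_derivative
          (1 / mu x) * (\<Sum>y\<in>{y. E x y}. w x y * (g' y - g' x))) (at t within S)"
    by (intro DERIV_cmult)
  thus ?thesis unfolding lap_def .
qed

lemma psi_comp_deriv:
  assumes a: "(a has_real_derivative a') (at t within S)" and b: "(b has_real_derivative b') (at t within S)"
    and pos: "a t > 0" "b t > 0" and psi_diff: "\<forall>s>0. psi differentiable (at s)"
  shows "((\<lambda>s. psi (a s / b s)) has_real_derivative
      deriv psi (a t / b t) * ((a' * b t - a t * b') / (b t * b t))) (at t within S)"
proof -
  have d: "(psi has_real_derivative deriv psi (a t / b t)) (at (a t / b t))"
    using psi_diff pos by (simp add: DERIV_deriv_iff_real_differentiable)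
  have q: "((\<lambda>s. a s / b s) has_real_derivative (a' * b t - a t * b') / (b t * b t)) (at t within S)"
    using a b pos by (auto intro!: derivative_eq_intros simp: field_simps power2_eq_square)
  show ?thesis using DERIV_chain2[OF d q] .
qed

lemma psilap_deriv:
  fixes E :: "'v::finite \<Rightarrow> 'v \<Rightarrow> bool"
  assumes d: "\<forall>y. (g y has_real_derivative g' y) (at t within S)" and pos: "\<forall>y. g y t > 0"
    and psi_diff: "\<forall>s>0. psi differentiable (at s)"
  shows "((\<lambda>s. psi_lap E w mu psi (\<lambda>y. g y s) x) has_real_derivative
     lap E w mu (\<lambda>y. deriv psi (g y t / g x t) * ((g' y * g x t - g y t * g' x) / (g x t * g x t))) x)
     (at t within S)"
proof -
  define D where "D y = deriv psi (g y t / g x t) * ((g' y * g x t - g y t * g' x) / (g x t * g x t))" for y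
  have "((\<lambda>s. psi (g y s / g x s)) has_real_derivative D y) (at t within S)" for y
    unfolding D_def using d pos psi_diff by (intro psi_comp_deriv) auto
  hence "((\<lambda>s. psi (g y s / g x s)) has_real_derivative D y) (at t within S)"
        "((\<lambda>s. psi (g x s / g x s)) has_real_derivative D x) (at t within S)" for y by blast+
  moreover have "D x = 0" unfolding D_def by simp
  ultimately have "((\<lambda>s. w x y * (psi (g y s / g x s) - psi (g x s / g x s))) has_real_derivative
       w x y * (D y - D x)) (at t within S)" for y
    by (intro DERIV_cmult DERIV_diff) auto
  hence "((\<lambda>s. \<Sum>y\<in>{y. E x y}. w x y * (psi (g y s / g x s) - psi (g x s / g x s))) has_real_derivative
          (\<Sum>y\<in>{y. E x y}. w x y * (D y - D x))) (at t within S)"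
    by (intro DERIV_sum) auto
  hence "((\<lambda>s. (1 / mu x) * (\<Sum>y\<in>{y. E x y}. w x y * (psi (g y s / g x s) - psi (g x s / g x s)))) has_real_derivative
          (1 / mu x) * (\<Sum>y\<in>{y. E x y}. w x y * (D y - D x))) (at t within S)"
    by (intro DERIV_cmult)
  thus ?thesis unfolding psi_lap_def lap_def D_def .
qed


lemma final_alg:
  fixes Om A0 G0 H0 B0 LA LB dH t0 n K \<alpha> c :: real
  assumes CD: "Om - LA \<ge> 2/n*A0^2 - 2*K*G0"
   and H: "H0 = -(1-\<alpha>)*A0 - \<alpha>*c*B0"
   and G: "G0 = c*B0 - A0"
   and LH: "-(1-\<alpha>)*LA - \<alpha>*c*LB \<le> 0"
   and dH: "dH = -(1-\<alpha>)*Om - \<alpha>*c*LB"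
   and D: "0 \<le> H0 + t0*dH"
   and G0: "G0 \<ge> 0" and t0: "t0 > 0" and a: "0 < \<alpha>" "\<alpha> < 1" and n: "n > 0" and K: "K > 0"
  shows "t0*H0 \<le> n/(2*(1-\<alpha>)) + t0*K*n/(2*\<alpha>)"
proof -
  have "\<alpha>*c*B0 = \<alpha>*G0 + \<alpha>*A0" unfolding G by (simp add: right_diff_distrib mult.assoc)
  hence A0: "A0 = -H0 - \<alpha>*G0" using H by (simp add: algebra_simps)
  have "dH \<le> -(1-\<alpha>)*(LA + 2/n*A0^2 - 2*K*G0) - \<alpha>*c*LB"
  proof -
    have "(1-\<alpha>)*(LA + 2/n*A0^2 - 2*K*G0) \<le> (1-\<alpha>)*Om"
      using CD a by (intro mult_left_mono) auto
    moreover have "dH = -((1-\<alpha>)*Om) - \<alpha>*c*LB" using dH by (simp add: algebra_simps)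
    moreover have "-(1-\<alpha>)*(LA + 2/n*A0^2 - 2*K*G0) = -((1-\<alpha>)*(LA + 2/n*A0^2 - 2*K*G0))" by (simp only: minus_mult_left)
    ultimately show ?thesis by linarith
  qed
  also have "\<dots> = (-(1-\<alpha>)*LA - \<alpha>*c*LB) + (2*(1-\<alpha>)*K*G0 - (2*(1-\<alpha>)/n)*A0^2)"
    using n by (simp add: field_simps)
  also have "\<dots> \<le> 2*(1-\<alpha>)*K*G0 - (2*(1-\<alpha>)/n)*A0^2"
    using LH by linarith
  finally have dH1: "dH \<le> 2*(1-\<alpha>)*K*G0 - (2*(1-\<alpha>)/n)*A0^2" .
  show ?thesis
  proof (rule ccontr)
    assume "\<not> ?thesis"
    hence contra: "t0*H0 > n/(2*(1-\<alpha>)) + t0*K*n/(2*\<alpha>)" by simp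
    have p1: "n/(2*(1-\<alpha>)) > 0" using n a by simp
    have p2: "t0*K*n/(2*\<alpha>) > 0" using n a t0 K by simp
    have hk: "H0 > K*n/(2*\<alpha>)"
    proof -
      have "t0*H0 > t0*(K*n/(2*\<alpha>))" using contra p1 by simp
      thus ?thesis using mult_less_cancel_left_pos[OF t0, of "K*n/(2*\<alpha>)" H0] by blast
    qed
    have "K*n/(2*\<alpha>) > 0" using K n a by simp
    hence H0p: "H0 > 0" using hk by linarith
    have th: "t0*H0 > n/(2*(1-\<alpha>))" using contra p2 by simp
    have sq: "A0^2 \<ge> H0^2 + 2*\<alpha>*H0*G0" unfolding A0 using a G0
      by (simp add: power2_eq_square algebra_simps)
    have c1: "(2*(1-\<alpha>)/n)*A0^2 \<ge> (2*(1-\<alpha>)/n)*(H0^2 + 2*\<alpha>*H0*G0)"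
      using sq a n by (intro mult_left_mono) auto
    have kk: "K - 2*\<alpha>*H0/n \<le> 0"
    proof -
      have "2*\<alpha>*H0 > K*n" using hk a by (simp add: field_simps)
      thus ?thesis using n by (simp add: field_simps)
    qed
    have c2: "2*(1-\<alpha>)*G0*(K - 2*\<alpha>*H0/n) \<le> 0"
      using kk a G0 by (simp add: mult_nonneg_nonpos)
    have e: "2*(1-\<alpha>)*K*G0 - (2*(1-\<alpha>)/n)*(H0^2 + 2*\<alpha>*H0*G0)
       = 2*(1-\<alpha>)*G0*(K - 2*\<alpha>*H0/n) - (2*(1-\<alpha>)/n)*H0^2"
      using n by (simp add: field_simps)
    have dH2: "dH \<le> - ((2*(1-\<alpha>)/n)*H0^2)" using dH1 c1 e c2 by linarith
    have "t0*dH \<le> t0*(- ((2*(1-\<alpha>)/n)*H0^2))" using dH2 t0 by (intro mult_left_mono) auto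
    hence "0 \<le> H0 - t0*((2*(1-\<alpha>)/n)*H0^2)" using D by simp
    also have "\<dots> = H0 * (1 - (2*(1-\<alpha>)/n)*(t0*H0))" by (simp add: power2_eq_square algebra_simps)
    also have "\<dots> < 0"
    proof -
      have "(2*(1-\<alpha>)/n)*(t0*H0) > (2*(1-\<alpha>)/n)*(n/(2*(1-\<alpha>)))"
        using th a n by (intro mult_strict_left_mono) auto
      also have "(2*(1-\<alpha>)/n)*(n/(2*(1-\<alpha>))) = 1" using a n by simp
      finally show ?thesis using H0p by (simp add: mult_pos_neg)
    qed
    finally show False by simp
  qed
qed


lemma within_to_at:
  assumes "(f has_real_derivative D) (at t within {0..})" "t > 0"
  shows "(f has_real_derivative D) (at t)"
proof -
  have "(f has_real_derivative D) (at t within {0<..})"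
    using assms(1) by (rule has_field_derivative_subset) auto
  moreover have "at t within {0<..} = at t" using assms(2) by (intro at_within_open) auto
  ultimately show ?thesis by simp
qed

theorem mainTheorem4:
  fixes E :: "'v::finite \<Rightarrow> 'v \<Rightarrow> bool" and w :: "'v \<Rightarrow> 'v \<Rightarrow> real" and mu :: "'v \<Rightarrow> real"
    and psi :: "real \<Rightarrow> real" and u :: "'v \<Rightarrow> real \<Rightarrow> real"
    and n K \<alpha> :: real
  assumes G: "weighted_graph E w mu"
    and n_pos: "n > 0" and K_pos: "K > 0"
    and psi_diff: "\<forall>s>0. psi differentiable (at s)"
    and psi_C1: "continuous_on {0<..} (deriv psi)"
    and psi_concave: "concave_on {0<..} psi"
    and CD: "CD_psi E w mu psi n (- K)"
    and heat: "pos_heat_solution E w mu UNIV u"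
    and \<alpha>: "0 < \<alpha>" "\<alpha> < 1"
  shows "\<forall>x. \<forall>t>0.
     (1 - \<alpha>) * psi_Gamma E w mu psi (\<lambda>y. u y t) x - deriv psi 1 * deriv (u x) t / u x t
       \<le> n / (2 * (1 - \<alpha>) * t) + K * n / \<alpha>"
proof (intro allI impI)
  fix x and T :: real
  assume T: "T > 0"
  have wpos: "\<forall>y. E x y \<longrightarrow> w x y > 0" for x using G unfolding weighted_graph_def by blast
  have mupos: "mu x > 0" for x using G unfolding weighted_graph_def by blast
  have upos: "u y t > 0" if "t \<ge> 0" for y t using heat that unfolding pos_heat_solution_def by blast
  have hd: "(u y has_real_derivative lap E w mu (\<lambda>z. u z t) y) (at t within {0..})" if "t \<ge> 0" for y t
    using heat that unfolding pos_heat_solution_def by blast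
  define L where "L y t = lap E w mu (\<lambda>z. u z t) y" for y t
  define A where "A y t = psi_lap E w mu psi (\<lambda>z. u z t) y" for y t
  define c where "c = deriv psi 1"
  define H where "H y t = -(1-\<alpha>)*A y t - \<alpha>*c*(L y t / u y t)" for y t
  define F where "F y t = t * H y t" for y t
  define LL where "LL y t = lap E w mu (\<lambda>z. L z t) y" for y t
  define Om where "Om y t = psi_Omega E w mu psi (\<lambda>z. u z t) y" for y t
  define dH where "dH y t = -(1-\<alpha>)*Om y t - \<alpha>*c*((LL y t * u y t - L y t * L y t)/(u y t * u y t))" for y t
  have dL: "(L y has_real_derivative LL y t) (at t within {0..})" if "t \<ge> 0" for y t
  proof -
    have "((\<lambda>t. lap E w mu (\<lambda>z. u z t) y) has_real_derivative lap E w mu (\<lambda>z. L z t) y) (at t within {0..})"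
      using hd[OF that] unfolding L_def by (intro lap_deriv) auto
    thus ?thesis unfolding LL_def L_def[abs_def] by simp
  qed
  have dA: "(A y has_real_derivative Om y t) (at t within {0..})" if "t \<ge> 0" for y t
  proof -
    have "((\<lambda>s. psi_lap E w mu psi (\<lambda>z. u z s) y) has_real_derivative
       lap E w mu (\<lambda>z. deriv psi (u z t / u y t) * ((L z t * u y t - u z t * L y t) / (u y t * u y t))) y)
       (at t within {0..})"
      using hd[OF that] upos[OF that] psi_diff unfolding L_def by (intro psilap_deriv) auto
    moreover have "(\<lambda>z. deriv psi (u z t / u y t) * ((L z t * u y t - u z t * L y t) / (u y t * u y t)))
       = (\<lambda>z. deriv psi (u z t / u y t) * (u z t / u y t) * (L z t / u z t - L y t / u y t))"
    proof
      fix z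
      have "u z t > 0" "u y t > 0" using upos[OF that] by auto
      thus "deriv psi (u z t / u y t) * ((L z t * u y t - u z t * L y t) / (u y t * u y t))
        = deriv psi (u z t / u y t) * (u z t / u y t) * (L z t / u z t - L y t / u y t)"
        by (simp add: field_simps)
    qed
    ultimately show ?thesis unfolding A_def[abs_def] Om_def psi_Omega_def L_def by simp
  qed
  have dHd: "(H y has_real_derivative dH y t) (at t within {0..})" if "t \<ge> 0" for y t
  proof -
    have q: "((\<lambda>t. L y t / u y t) has_real_derivative (LL y t * u y t - L y t * L y t)/(u y t * u y t)) (at t within {0..})"
      using dL[OF that, of y] hd[OF that, of y] upos[OF that, of y] unfolding L_def
      by (intro DERIV_divide) auto
    have "((\<lambda>t. -(1-\<alpha>)*A y t - \<alpha>*c*(L y t / u y t)) has_real_derivative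
        -(1-\<alpha>)*Om y t - \<alpha>*c*((LL y t * u y t - L y t * L y t)/(u y t * u y t))) (at t within {0..})"
      by (intro DERIV_diff DERIV_cmult q dA that)
    thus ?thesis unfolding H_def[abs_def] dH_def by simp
  qed
  have dF: "(F y has_real_derivative 1 * H y t + dH y t * t) (at t within {0..})" if "t \<ge> 0" for y t
    unfolding F_def[abs_def] by (intro DERIV_mult DERIV_ident dHd that)
  have contF: "continuous_on {0..T} (F y)" for y
  proof -
    have "continuous (at t within {0..T}) (F y)" if "t \<in> {0..T}" for t
      using DERIV_continuous[OF dF] that continuous_within_subset[of t "{0..}" "F y" "{0..T}"] by auto
    thus ?thesis by (simp add: continuous_on_eq_continuous_within)
  qed
  have "\<forall>y. \<exists>s\<in>{0..T}. \<forall>r\<in>{0..T}. F y r \<le> F y s"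
    using contF T by (intro allI continuous_attains_sup) auto
  then obtain ty where ty: "\<And>y. ty y \<in> {0..T}" "\<And>y r. r \<in> {0..T} \<Longrightarrow> F y r \<le> F y (ty y)"
    by metis
  define m where "m = Max (range (\<lambda>y. F y (ty y)))"
  have "m \<in> range (\<lambda>y. F y (ty y))" unfolding m_def by (intro Max_in) auto
  then obtain x0 where x0: "m = F x0 (ty x0)" by auto
  have mge: "F y (ty y) \<le> m" for y unfolding m_def by (intro Max_ge) auto
  define t0 where "t0 = ty x0"
  have t0T: "0 \<le> t0" "t0 \<le> T" using ty(1)[of x0] unfolding t0_def by auto
  have gmax: "F y r \<le> F x0 t0" if "r \<in> {0..T}" for y r
    using ty(2)[OF that, of y] mge[of y] x0 unfolding t0_def by simp
  have bound: "F x0 t0 \<le> n/(2*(1-\<alpha>)) + T*K*n/(2*\<alpha>)"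
  proof (cases "t0 = 0")
    case True
    thus ?thesis using n_pos K_pos T \<alpha> unfolding F_def by (simp add: add_pos_pos)
  next
    case False
    hence t0p: "t0 > 0" using t0T by simp
    define f where "f = (\<lambda>z. u z t0)"
    have fpos: "\<forall>z. f z > 0" unfolding f_def using upos t0T by auto
    have dFat: "(F x0 has_real_derivative 1 * H x0 t0 + dH x0 t0 * t0) (at t0)"
      using within_to_at[OF dF[OF t0T(1)] t0p] .
    have D: "0 \<le> H x0 t0 + t0 * dH x0 t0"
    proof (rule ccontr)
      assume "\<not> ?thesis"
      hence "1 * H x0 t0 + dH x0 t0 * t0 < 0" by (simp add: algebra_simps)
      from DERIV_neg_dec_left[OF dFat this] obtain d where d: "d > 0" "\<forall>h>0. h < d \<longrightarrow> F x0 t0 < F x0 (t0 - h)" by blast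
      define h where "h = min (d/2) t0"
      have "h > 0" "h < d" "h \<le> t0" using d t0p unfolding h_def by auto
      hence "F x0 t0 < F x0 (t0 - h)" using d by auto
      moreover have "F x0 (t0 - h) \<le> F x0 t0" using gmax \<open>h > 0\<close> \<open>h \<le> t0\<close> t0T by auto
      ultimately show False by simp
    qed
    have Hmax: "\<forall>y. H y t0 \<le> H x0 t0"
    proof
      fix y
      have "t0 * H y t0 \<le> t0 * H x0 t0" using gmax[of t0 y] t0T unfolding F_def by auto
      thus "H y t0 \<le> H x0 t0" using t0p by simp
    qed
    have lm: "lap E w mu (\<lambda>y. f y * H y t0) x0 - lap E w mu f x0 * H x0 t0 \<le> 0"
      using lap_max[OF fpos mupos wpos Hmax] .
    have fH: "(\<lambda>y. f y * H y t0) = (\<lambda>y. (-(1-\<alpha>)) * (f y * A y t0) + (-(\<alpha>*c)) * L y t0)"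
    proof
      fix y
      have "f y > 0" using fpos by auto
      thus "f y * H y t0 = (-(1-\<alpha>)) * (f y * A y t0) + (-(\<alpha>*c)) * L y t0"
        unfolding H_def f_def by (simp add: field_simps)
    qed
    have lapfH: "lap E w mu (\<lambda>y. f y * H y t0) x0
        = (-(1-\<alpha>)) * lap E w mu (\<lambda>y. f y * A y t0) x0 + (-(\<alpha>*c)) * LL x0 t0"
      unfolding fH lap_lin LL_def ..
    have Lf: "lap E w mu f x0 = L x0 t0" unfolding f_def L_def by simp
    define u0 where "u0 = u x0 t0"
    have u0: "u0 > 0" using fpos unfolding u0_def f_def by auto
    define B0 where "B0 = L x0 t0 / u0"
    define LA where "LA = lap E w mu (\<lambda>y. f y * A y t0) x0 / u0 - B0 * A x0 t0"
    define LB where "LB = LL x0 t0 / u0 - B0 * B0"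
    define G0 where "G0 = psi_Gamma E w mu psi f x0"
    have G0eq: "G0 = c * B0 - A x0 t0"
      unfolding G0_def B0_def c_def A_def using gamma_eq[of f x0] fpos by (simp add: f_def u0_def L_def)
    have G0nn: "G0 \<ge> 0" unfolding G0_def using gamma_nonneg[OF fpos mupos wpos psi_diff psi_concave] .
    have CDi: "psi_Gamma2 E w mu psi f x0 \<ge> (1 / n) * (psi_lap E w mu psi f x0)\<^sup>2 + (-K) * psi_Gamma E w mu psi f x0"
      using CD fpos unfolding CD_psi_def by blast
    have g2: "psi_Gamma2 E w mu psi f x0 = (Om x0 t0 - LA) / 2"
      unfolding psi_Gamma2_def LA_def B0_def Om_def f_def A_def u0_def L_def
      by (simp add: field_simps)
    have CD2: "Om x0 t0 - LA \<ge> 2/n*(A x0 t0)^2 - 2*K*G0"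
      using CDi n_pos unfolding g2 G0_def[symmetric] by (simp add: A_def f_def field_simps)
    have LH: "-(1-\<alpha>)*LA - \<alpha>*c*LB \<le> 0"
    proof -
      have "(lap E w mu (\<lambda>y. f y * H y t0) x0 - lap E w mu f x0 * H x0 t0) / u0 \<le> 0"
        using lm u0 by (simp add: divide_nonpos_pos)
      moreover have "(lap E w mu (\<lambda>y. f y * H y t0) x0 - lap E w mu f x0 * H x0 t0) / u0
          = -(1-\<alpha>)*LA - \<alpha>*c*LB"
      proof -
        have He1: "H x0 t0 = -(1-\<alpha>)*A x0 t0 - \<alpha>*c*(L x0 t0 / u0)" unfolding H_def u0_def ..
        have "(lap E w mu (\<lambda>y. f y * H y t0) x0 - lap E w mu f x0 * H x0 t0) / u0
          = ((-(1-\<alpha>)) * lap E w mu (\<lambda>y. f y * A y t0) x0 + (-(\<alpha>*c)) * LL x0 t0 - L x0 t0 * H x0 t0) / u0"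
          unfolding lapfH Lf ..
        also have "\<dots> = -(1-\<alpha>)*LA - \<alpha>*c*LB"
          unfolding LA_def LB_def B0_def He1 using u0 by (simp add: field_simps)
        finally show ?thesis .
      qed
      ultimately show ?thesis by simp
    qed
    have dHe: "dH x0 t0 = -(1-\<alpha>)*Om x0 t0 - \<alpha>*c*LB"
      unfolding dH_def LB_def B0_def u0_def using u0 unfolding u0_def by (simp add: field_simps)
    have He: "H x0 t0 = -(1-\<alpha>)*A x0 t0 - \<alpha>*c*B0" unfolding H_def B0_def u0_def ..
    have "t0 * H x0 t0 \<le> n/(2*(1-\<alpha>)) + t0*K*n/(2*\<alpha>)"
      by (rule final_alg[OF CD2 He G0eq LH dHe D G0nn t0p \<alpha> n_pos K_pos])
    also have "\<dots> \<le> n/(2*(1-\<alpha>)) + T*K*n/(2*\<alpha>)"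
      using t0T K_pos n_pos \<alpha> by (intro add_left_mono divide_right_mono mult_right_mono) auto
    finally show ?thesis unfolding F_def .
  qed
  have FT: "T * H x T \<le> n/(2*(1-\<alpha>)) + T*K*n/(2*\<alpha>)"
    using gmax[of T x] bound T unfolding F_def by auto
  have HT: "H x T \<le> n / (2 * (1 - \<alpha>) * T) + K * n / (2*\<alpha>)"
  proof -
    have "H x T \<le> (n/(2*(1-\<alpha>)) + T*K*n/(2*\<alpha>)) / T" using FT T by (simp add: pos_le_divide_eq mult.commute)
    also have "\<dots> = n/(2*(1-\<alpha>)) / T + K * n / (2*\<alpha>)" using T by (simp add: add_divide_distrib)
    also have "n/(2*(1-\<alpha>)) / T = n / (2 * (1 - \<alpha>) * T)" by simp
    finally show ?thesis .
  qed
  have der: "deriv (u x) T = L x T"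
    unfolding L_def using within_to_at[OF hd T] T by (intro DERIV_imp_deriv) auto
  have ga: "psi_Gamma E w mu psi (\<lambda>y. u y T) x = c * (L x T / u x T) - A x T"
    unfolding c_def A_def L_def using gamma_eq[of "\<lambda>y. u y T" x E w mu psi] upos[of T x] T by simp
  have lhs: "(1 - \<alpha>) * psi_Gamma E w mu psi (\<lambda>y. u y T) x - deriv psi 1 * deriv (u x) T / u x T = H x T"
  proof -
    have e: "c * L x T / u x T = c * (L x T / u x T)" by simp
    have gen: "(1-\<alpha>)*(c*B - a) - c*B = -(1-\<alpha>)*a - \<alpha>*c*B" for B a :: real
      by (simp add: algebra_simps)
    show ?thesis unfolding ga der H_def c_def[symmetric] e by (rule gen)
  qed
  have "K * n / (2*\<alpha>) \<le> K * n / \<alpha>" using K_pos n_pos \<alpha> by (simp add: frac_le)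
  thus "(1 - \<alpha>) * psi_Gamma E w mu psi (\<lambda>y. u y T) x - deriv psi 1 * deriv (u x) T / u x T
       \<le> n / (2 * (1 - \<alpha>) * T) + K * n / \<alpha>"
    unfolding lhs using HT by simp
qed

end
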